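(* Let $G$ be a $B_2$-EPG graph given with a representation, let $a,b$ be two rows, and let $G_{ab}$ be the set of vertices of $G$ with index exactly $\{a,b\}$. Then the subgraph of $G$ induced by $G_{ab}$ is a $2$-track interval graph.
   Context: A graph $G$ is a $B_k$-EPG graph if each vertex $u$ can be assigned a path $P_u$ in the planar orthogonal grid with at most $k$ bends such that $uv\in E(G)$ iff $P_u$ and $P_v$ share at least one grid edge (a representation); for $B_2$-EPG graphs one assumes w.l.o.g. every path has exactly two bends. A vertex $u$ intersects a row if $P_u$ contains a grid edge of that row; the index of $u$ is the set of rows it intersects. A $2$-track interval is the union of two intervals lying on two distinct lines (tracks); a $2$-track interval graph is an intersection graph of $2$-track intervals with the same two tracks, i.e. the edge-union of two interval graphs on the same vertex set. *)

theory Defs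
  imports Complex_Main
begin

type_synonym gpoint = "int \<times> int"   \<comment> \<open>grid point (column x, row y)\<close>

definition grid_adj :: "gpoint \<Rightarrow> gpoint \<Rightarrow> bool" where
  "grid_adj p q \<longleftrightarrow> \<bar>fst p - fst q\<bar> + \<bar>snd p - snd q\<bar> = 1"

definition grid_path :: "gpoint list \<Rightarrow> bool" where
  "grid_path ps \<longleftrightarrow> length ps \<ge> 2 \<and> distinct ps \<and>
     (\<forall>i. Suc i < length ps \<longrightarrow> grid_adj (ps ! i) (ps ! Suc i))"

definition path_edges :: "gpoint list \<Rightarrow> gpoint set set" where
  "path_edges ps = {{ps ! i, ps ! Suc i} | i. Suc i < length ps}"

definition step_dir :: "gpoint \<Rightarrow> gpoint \<Rightarrow> int \<times> int" where
  "step_dir p q = (fst q - fst p, snd q - snd p)"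

definition bends :: "gpoint list \<Rightarrow> nat" where
  "bends ps = card {i. 0 < i \<and> Suc i < length ps \<and>
      step_dir (ps ! (i - 1)) (ps ! i) \<noteq> step_dir (ps ! i) (ps ! Suc i)}"

definition intersects_row :: "gpoint list \<Rightarrow> int \<Rightarrow> bool" where
  "intersects_row ps y \<longleftrightarrow> (\<exists>x. {(x, y), (x + 1, y)} \<in> path_edges ps)"

definition row_index :: "('v \<Rightarrow> gpoint list) \<Rightarrow> 'v \<Rightarrow> int set" where
  "row_index P u = {y. intersects_row (P u) y}"

definition Bk_EPG_rep :: "nat \<Rightarrow> 'v set \<Rightarrow> ('v \<Rightarrow> 'v \<Rightarrow> bool) \<Rightarrow> ('v \<Rightarrow> gpoint list) \<Rightarrow> bool" where
  "Bk_EPG_rep k V E P \<longleftrightarrow>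
     (\<forall>u\<in>V. grid_path (P u) \<and> bends (P u) \<le> k) \<and>
     (\<forall>u\<in>V. \<forall>v\<in>V. u \<noteq> v \<longrightarrow> (E u v \<longleftrightarrow> path_edges (P u) \<inter> path_edges (P v) \<noteq> {}))"

definition two_track_interval_graph :: "'v set \<Rightarrow> ('v \<Rightarrow> 'v \<Rightarrow> bool) \<Rightarrow> bool" where
  "two_track_interval_graph V E \<longleftrightarrow>
     (\<exists>(l1::'v \<Rightarrow> real) (r1::'v \<Rightarrow> real) (l2::'v \<Rightarrow> real) (r2::'v \<Rightarrow> real).
        (\<forall>u\<in>V. l1 u \<le> r1 u \<and> l2 u \<le> r2 u) \<and>
        (\<forall>u\<in>V. \<forall>v\<in>V. u \<noteq> v \<longrightarrow>
           (E u v \<longleftrightarrow> {l1 u..r1 u} \<inter> {l1 v..r1 v} \<noteq> {} \<or> {l2 u..r2 u} \<inter> {l2 v..r2 v} \<noteq> {})))"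

end

theory Submission
  imports Defs
begin


definition hedges :: "int \<Rightarrow> int \<Rightarrow> int \<Rightarrow> gpoint set set" where
  "hedges y A B = (\<lambda>x. {(x,y),(x+1,y)}) ` {A..<B}"
definition vedges :: "int \<Rightarrow> int \<Rightarrow> int \<Rightarrow> gpoint set set" where
  "vedges x A B = (\<lambda>y. {(x,y),(x,y+1)}) ` {A..<B}"

lemma int_ins_top: "(A::int) \<le> B \<Longrightarrow> {A..<B+1} = insert B {A..<B}" by auto
lemma int_ins_bot: "(A::int) \<le> B \<Longrightarrow> {A-1..<B} = insert (A-1) {A..<B}" by auto

lemma hseg:
  fixes f :: "nat \<Rightarrow> gpoint" and s :: int
  assumes "\<forall>k. p \<le> k \<and> k < p + m \<longrightarrow> f (Suc k) = (fst (f k) + s, snd (f k))" and "s = 1 \<or> s = -1"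
  shows "f (p+m) = (fst (f p) + s * int m, snd (f p)) \<and>
    (\<lambda>k. {f k, f (Suc k)}) ` {p..<p+m} = hedges (snd (f p)) (min (fst (f p)) (fst (f p) + s * int m)) (max (fst (f p)) (fst (f p) + s * int m))"
  using assms(1)
proof (induction m)
  case 0
  then show ?case by (simp add: hedges_def)
next
  case (Suc m)
  have IH: "f (p+m) = (fst (f p) + s * int m, snd (f p)) \<and>
    (\<lambda>k. {f k, f (Suc k)}) ` {p..<p+m} = hedges (snd (f p)) (min (fst (f p)) (fst (f p) + s * int m)) (max (fst (f p)) (fst (f p) + s * int m))"
    using Suc by auto
  obtain x0 y where fp: "f p = (x0, y)" by fastforce
  have e: "f (p + Suc m) = (x0 + s * int m + s, y)"
    using Suc.prems[rule_format, of "p+m"] IH fp by simp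
  have img: "{p..<p + Suc m} = insert (p+m) {p..<p+m}" by auto
  show ?case
  proof (cases "s = 1")
    case True
    have "hedges y x0 (x0 + int m + 1) = insert {(x0 + int m, y), (x0 + int m + 1, y)} (hedges y x0 (x0 + int m))"
      unfolding hedges_def by (subst int_ins_top) auto
    then show ?thesis using IH fp e True img by (simp add: insert_commute ac_simps)
  next
    case False
    then have s: "s = -1" using assms(2) by auto
    have "hedges y (x0 + (- 1 - int m)) x0 = insert {(x0 - int m, y), (x0 - int m - 1, y)} (hedges y (x0 - int m) x0)"
      unfolding hedges_def using int_ins_bot[of "x0 - int m" x0] int_ins_bot[of "y - int m" y] by (auto simp: insert_commute algebra_simps)
    then show ?thesis using IH fp e s img by (simp add: insert_commute)
  qed
qed

lemma vseg:
  fixes f :: "nat \<Rightarrow> gpoint" and s :: int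
  assumes "\<forall>k. p \<le> k \<and> k < p + m \<longrightarrow> f (Suc k) = (fst (f k), snd (f k) + s)" and "s = 1 \<or> s = -1"
  shows "f (p+m) = (fst (f p), snd (f p) + s * int m) \<and>
    (\<lambda>k. {f k, f (Suc k)}) ` {p..<p+m} = vedges (fst (f p)) (min (snd (f p)) (snd (f p) + s * int m)) (max (snd (f p)) (snd (f p) + s * int m))"
  using assms(1)
proof (induction m)
  case 0
  then show ?case by (simp add: vedges_def)
next
  case (Suc m)
  have IH: "f (p+m) = (fst (f p), snd (f p) + s * int m) \<and>
    (\<lambda>k. {f k, f (Suc k)}) ` {p..<p+m} = vedges (fst (f p)) (min (snd (f p)) (snd (f p) + s * int m)) (max (snd (f p)) (snd (f p) + s * int m))"
    using Suc by auto
  obtain x0 y where fp: "f p = (x0, y)" by fastforce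
  have e: "f (p + Suc m) = (x0, y + s * int m + s)"
    using Suc.prems[rule_format, of "p+m"] IH fp by simp
  have img: "{p..<p + Suc m} = insert (p+m) {p..<p+m}" by auto
  show ?case
  proof (cases "s = 1")
    case True
    have "vedges x0 y (y + int m + 1) = insert {(x0, y + int m), (x0, y + int m + 1)} (vedges x0 y (y + int m))"
      unfolding vedges_def by (subst int_ins_top) auto
    then show ?thesis using IH fp e True img by (simp add: insert_commute ac_simps)
  next
    case False
    then have s: "s = -1" using assms(2) by auto
    have "vedges x0 (y + (- 1 - int m)) y = insert {(x0, y - int m), (x0, y - int m - 1)} (vedges x0 (y - int m) y)"
      unfolding vedges_def using int_ins_bot[of "x0 - int m" x0] int_ins_bot[of "y - int m" y] by (auto simp: insert_commute algebra_simps)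
    then show ?thesis using IH fp e s img by (simp add: insert_commute)
  qed
qed

lemma no_change:
  fixes p q :: nat
  assumes "p \<le> q" "\<forall>i. p < i \<and> i \<le> q \<longrightarrow> d (i-1) = d i"
  shows "d p = d q"
  using assms
proof (induction q)
  case 0 then show ?case by simp
next
  case (Suc q)
  show ?case
  proof (cases "p = Suc q")
    case False
    then have "d p = d q" using Suc by auto
    moreover have "d q = d (Suc q)" using Suc.prems(2)[rule_format, of "Suc q"] False Suc.prems(1) by simp
    ultimately show ?thesis by simp
  qed simp
qed




lemma adj_h:
  assumes "grid_adj p q" "snd p = snd q"
  shows "q = (fst p + (fst q - fst p), snd p) \<and> (fst q - fst p = 1 \<or> fst q - fst p = -1)"
  using assms unfolding grid_adj_def by (cases p, cases q) auto

lemma adj_v: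
  assumes "grid_adj p q" "snd p \<noteq> snd q"
  shows "q = (fst p, snd p + (snd q - snd p)) \<and> (snd q - snd p = 1 \<or> snd q - snd p = -1)"
  using assms unfolding grid_adj_def by (cases p, cases q) auto

lemma char_ordered:
  fixes ps :: "gpoint list"
  assumes gp: "\<forall>i. Suc i < length ps \<longrightarrow> grid_adj (ps!i) (ps!Suc i)"
   and bd: "bends ps \<le> 2"
   and ka: "Suc ka < length ps" "snd (ps!ka) = a" "snd (ps!Suc ka) = a"
   and kb: "Suc kb < length ps" "snd (ps!kb) = b" "snd (ps!Suc kb) = b"
   and kab: "ka < kb" and ab: "a \<noteq> b"
  shows "\<exists>xu la ra lb rb. la < ra \<and> (xu = la \<or> xu = ra) \<and> lb < rb \<and> (xu = lb \<or> xu = rb) \<and>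
     path_edges ps = hedges a la ra \<union> vedges xu (min a b) (max a b) \<union> hedges b lb rb"
proof -
  define n where "n = length ps"
  define f where "f = (\<lambda>k. ps ! k)"
  define d where "d = (\<lambda>k. step_dir (f k) (f (Suc k)))"
  have adj: "\<And>i. Suc i < n \<Longrightarrow> grid_adj (f i) (f (Suc i))" using gp by (simp add: f_def n_def)
  obtain k where k: "ka \<le> k" "k < kb" "snd (f k) \<noteq> snd (f (Suc k))"
  proof (rule ccontr)
    assume "\<not> thesis"
    then have "\<forall>i. ka < i \<and> i \<le> kb \<longrightarrow> (\<lambda>j. snd (f j)) (i-1) = (\<lambda>j. snd (f j)) i"
    proof (intro allI impI)
      fix i assume "ka < i \<and> i \<le> kb"
      then have "ka \<le> i - 1" "i - 1 < kb" "Suc (i - 1) = i" by auto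
      then show "(\<lambda>j. snd (f j)) (i-1) = (\<lambda>j. snd (f j)) i"
        using that[of "i - 1"] \<open>\<not> thesis\<close> by auto
    qed
    from no_change[OF _ this] kab have "snd (f ka) = snd (f kb)" by simp
    then show False using ka kb ab by (simp add: f_def)
  qed
  have kne: "k \<noteq> ka" using k ka by (auto simp: f_def)
  have n1: "d ka \<noteq> d k" using k ka by (auto simp: d_def step_dir_def f_def)
  have n2: "d k \<noteq> d kb" using k kb by (auto simp: d_def step_dir_def f_def)
  have "\<not> (\<forall>i. ka < i \<and> i \<le> k \<longrightarrow> d (i-1) = d i)" using no_change[of ka k d] n1 k by auto
  then obtain i1 where i1: "ka < i1" "i1 \<le> k" "d (i1 - 1) \<noteq> d i1" by auto
  have "\<not> (\<forall>i. k < i \<and> i \<le> kb \<longrightarrow> d (i-1) = d i)" using no_change[of k kb d] n2 k by auto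
  then obtain i2 where i2: "k < i2" "i2 \<le> kb" "d (i2 - 1) \<noteq> d i2" by auto
  define B where "B = {i. 0 < i \<and> Suc i < n \<and> d (i - 1) \<noteq> d i}"
  have "B = {i. 0 < i \<and> Suc i < length ps \<and>
      step_dir (ps ! (i - 1)) (ps ! i) \<noteq> step_dir (ps ! i) (ps ! Suc i)}"
    unfolding B_def d_def f_def n_def by (rule Collect_cong) auto
  then have cB: "card B \<le> 2" using bd unfolding bends_def by simp
  have fB: "finite B" unfolding B_def by (rule finite_subset[of _ "{..<n}"]) auto
  have i1B: "i1 \<in> B" and i2B: "i2 \<in> B" using i1 i2 k kb unfolding B_def n_def by auto
  have nob: "d (i - 1) = d i" if "0 < i" "Suc i < n" "i \<noteq> i1" "i \<noteq> i2" for i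
  proof (rule ccontr)
    assume "d (i - 1) \<noteq> d i"
    then have "{i, i1, i2} \<subseteq> B" using that i1B i2B unfolding B_def by auto
    then have "card {i, i1, i2} \<le> card B" using fB card_mono by blast
    moreover have "card {i, i1, i2} = 3" using that i1 i2 k by auto
    ultimately show False using cB by simp
  qed
  have nkb: "Suc kb < n" using kb n_def by simp
  have seg1: "d j = d ka" if "j < i1" for j
  proof (cases "j \<le> ka")
    case True
    have "\<forall>i. j < i \<and> i \<le> ka \<longrightarrow> d (i-1) = d i" 
      proof (intro allI impI nob) qed (use i1 i2 k nkb that True in auto)
    then show ?thesis using no_change[of j ka d] True by auto
  next
    case False
    have "\<forall>i. ka < i \<and> i \<le> j \<longrightarrow> d (i-1) = d i" 
      proof (intro allI impI nob) qed (use i1 i2 k nkb that False in auto)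
    then show ?thesis using no_change[of ka j d] False by auto
  qed
  have seg2: "d j = d k" if "i1 \<le> j" "j < i2" for j
  proof (cases "j \<le> k")
    case True
    have "\<forall>i. j < i \<and> i \<le> k \<longrightarrow> d (i-1) = d i" 
      proof (intro allI impI nob) qed (use i1 i2 k nkb that True in auto)
    then show ?thesis using no_change[of j k d] True by auto
  next
    case False
    have "\<forall>i. k < i \<and> i \<le> j \<longrightarrow> d (i-1) = d i" 
      proof (intro allI impI nob) qed (use i1 i2 k nkb that False in auto)
    then show ?thesis using no_change[of k j d] False by auto
  qed
  have seg3: "d j = d kb" if "i2 \<le> j" "Suc j < n" for j
  proof (cases "j \<le> kb")
    case True
    have "\<forall>i. j < i \<and> i \<le> kb \<longrightarrow> d (i-1) = d i" 
      proof (intro allI impI nob) qed (use i1 i2 k nkb that True in auto)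
    then show ?thesis using no_change[of j kb d] True by auto
  next
    case False
    have "\<forall>i. kb < i \<and> i \<le> j \<longrightarrow> d (i-1) = d i" 
      proof (intro allI impI nob) qed (use i1 i2 k nkb that False in auto)
    then show ?thesis using no_change[of kb j d] False by auto
  qed
  define sa where "sa = fst (d ka)"
  define sv where "sv = snd (d k)"
  define sb where "sb = fst (d kb)"
  have hka: "f (Suc ka) = (fst (f ka) + sa, snd (f ka)) \<and> (sa = 1 \<or> sa = -1)"
    using adj_h[OF adj[of ka]] ka n_def unfolding sa_def d_def step_dir_def f_def by auto
  have hkb: "f (Suc kb) = (fst (f kb) + sb, snd (f kb)) \<and> (sb = 1 \<or> sb = -1)"
    using adj_h[OF adj[of kb]] kb n_def unfolding sb_def d_def step_dir_def f_def by auto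
  have hk: "f (Suc k) = (fst (f k), snd (f k) + sv) \<and> (sv = 1 \<or> sv = -1)"
    using adj_v[OF adj[of k]] k nkb unfolding sv_def d_def step_dir_def by auto
  have dka: "d ka = (sa, 0)" using hka unfolding d_def step_dir_def by (simp add: sa_def) 
  have dkb: "d kb = (sb, 0)" using hkb unfolding d_def step_dir_def by (simp add: sb_def)
  have dk: "d k = (0, sv)" using hk unfolding d_def step_dir_def by (simp add: sv_def)
  have st: "f (Suc j) = (fst (f j) + fst (d j), snd (f j) + snd (d j))" for j
    unfolding d_def step_dir_def by simp
  have S1: "\<forall>j. 0 \<le> j \<and> j < 0 + i1 \<longrightarrow> f (Suc j) = (fst (f j) + sa, snd (f j))"
    using seg1 st dka by simp
  have S1': "\<forall>j. 0 \<le> j \<and> j < 0 + ka \<longrightarrow> f (Suc j) = (fst (f j) + sa, snd (f j))"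
    using S1 i1 by auto
  have S2: "\<forall>j. i1 \<le> j \<and> j < i1 + (i2 - i1) \<longrightarrow> f (Suc j) = (fst (f j), snd (f j) + sv)"
    using seg2 st dk i1 i2 k by simp
  have S3: "\<forall>j. i2 \<le> j \<and> j < i2 + (n - 1 - i2) \<longrightarrow> f (Suc j) = (fst (f j) + sb, snd (f j))"
    using seg3 st dkb i2 kb nkb by (simp add: Suc_lessI less_diff_conv)
  have S3': "\<forall>j. i2 \<le> j \<and> j < i2 + (kb - i2) \<longrightarrow> f (Suc j) = (fst (f j) + sb, snd (f j))"
    using S3 i2 nkb by auto
  note H1 = hseg[OF S1] hka
  note H1' = hseg[OF S1'] hka
  note H2 = vseg[OF S2] hk
  note H3 = hseg[OF S3] hkb
  note H3' = hseg[OF S3'] hkb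
  have ya: "snd (f 0) = a" using H1' ka by (simp add: f_def)
  have yb: "snd (f i2) = b" using H3' i2 kb by (simp add: f_def)
  define x0 where "x0 = fst (f 0)"
  define xu where "xu = fst (f i1)"
  define xe where "xe = fst (f (n-1))"
  have fi1: "f i1 = (x0 + sa * int i1, a)" using H1 ya x0_def by simp
  have fi2: "f i2 = (xu, a + sv * int (i2 - i1))" using H2 i1 i2 fi1 xu_def by simp
  have fe: "xe = xu + sb * int (n - 1 - i2)" using H3 fi2 i2 nkb xe_def by simp
  have bb: "b = a + sv * int (i2 - i1)" using fi2 yb by simp
  have pe: "path_edges ps = (\<lambda>i. {f i, f (Suc i)}) ` {0..<n-1}"
    unfolding path_edges_def f_def n_def by auto
  have split: "{0..<n-1} = {0..<0+i1} \<union> {i1..<i1+(i2-i1)} \<union> {i2..<i2+(n-1-i2)}"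
    using i1 i2 k nkb by auto
  have E: "path_edges ps = hedges a (min x0 xu) (max x0 xu) \<union> vedges xu (min a b) (max a b)
       \<union> hedges b (min xu xe) (max xu xe)"
    unfolding pe split image_Un using H1 H2 H3 ya yb fi1 fi2 fe bb x0_def xu_def by simp
  show ?thesis
  proof (intro exI conjI)
    show "path_edges ps = hedges a (min x0 xu) (max x0 xu) \<union> vedges xu (min a b) (max a b)
       \<union> hedges b (min xu xe) (max xu xe)" by (rule E)
    show "min x0 xu < max x0 xu" using fi1 xu_def hka i1 by auto
    show "xu = min x0 xu \<or> xu = max x0 xu" by auto
    show "min xu xe < max xu xe" using fe hkb i2 nkb by auto
    show "xu = min xu xe \<or> xu = max xu xe" by auto
  qed
qed




lemma hh: "hedges y A B \<inter> hedges y C D \<noteq> {} \<longleftrightarrow> {A..<B} \<inter> {C..<D} \<noteq> {}"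
proof
  assume "hedges y A B \<inter> hedges y C D \<noteq> {}"
  then show "{A..<B} \<inter> {C..<D} \<noteq> {}" unfolding hedges_def by (auto simp: doubleton_eq_iff)
next
  assume "{A..<B} \<inter> {C..<D} \<noteq> {}"
  then obtain x where "x \<in> {A..<B}" "x \<in> {C..<D}" by blast
  then have "{(x,y),(x+1,y)} \<in> hedges y A B \<inter> hedges y C D" by (simp add: hedges_def)
  then show "hedges y A B \<inter> hedges y C D \<noteq> {}" by blast
qed
lemma hh': "y \<noteq> y' \<Longrightarrow> hedges y A B \<inter> hedges y' C D = {}"
  unfolding hedges_def by (auto simp: doubleton_eq_iff)
lemma hv: "hedges y A B \<inter> vedges x C D = {}"
  unfolding hedges_def vedges_def by (auto simp: doubleton_eq_iff)
lemma vv: "C < D \<Longrightarrow> vedges x C D \<inter> vedges x' C D \<noteq> {} \<longleftrightarrow> x = x'"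
  unfolding vedges_def by (auto simp: doubleton_eq_iff)

lemma share:
  assumes "a \<noteq> b"
  shows "(hedges a la1 ra1 \<union> vedges x1 (min a b) (max a b) \<union> hedges b lb1 rb1) \<inter>
         (hedges a la2 ra2 \<union> vedges x2 (min a b) (max a b) \<union> hedges b lb2 rb2) \<noteq> {}
     \<longleftrightarrow> {la1..<ra1} \<inter> {la2..<ra2} \<noteq> {} \<or> {lb1..<rb1} \<inter> {lb2..<rb2} \<noteq> {} \<or> x1 = x2"
proof -
  have m: "min a b < max a b" using assms by auto
  have e: "\<And>X Y. X \<inter> Y = {} \<Longrightarrow> Y \<inter> X = {}" by blast
  show ?thesis
    unfolding Int_Un_distrib Int_Un_distrib2 Un_empty[symmetric]
    using hh[of a la1 ra1 la2 ra2] hh[of b lb1 rb1 lb2 rb2] vv[OF m, of x1 x2]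
      hh'[OF assms, of la1 ra1 lb2 rb2] e[OF hh'[OF assms, of la2 ra2 lb1 rb1]]
      hv[of a la1 ra1 x2] hv[of a la2 ra2 x1] hv[of b lb1 rb1 x2] hv[of b lb2 rb2 x1]
      e[OF hv[of a la1 ra1 x2]] e[OF hv[of a la2 ra2 x1]] e[OF hv[of b lb1 rb1 x2]] e[OF hv[of b lb2 rb2 x1]]
    by auto
qed

definition LL :: "int \<Rightarrow> int \<Rightarrow> real" where "LL l x = real_of_int l + (if x = l then 0 else 1/4)"
definition RR :: "int \<Rightarrow> int \<Rightarrow> real" where "RR r x = real_of_int r - (if x = r then 0 else 1/4)"

lemma LR: "l < r \<Longrightarrow> LL l x \<le> RR r x"
  unfolding LL_def RR_def by auto

lemma track:
  fixes l1 r1 x1 l2 r2 x2 :: int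
  assumes "l1 < r1" "x1 = l1 \<or> x1 = r1" "l2 < r2" "x2 = l2 \<or> x2 = r2"
  shows "{LL l1 x1 .. RR r1 x1} \<inter> {LL l2 x2 .. RR r2 x2} \<noteq> {} \<longleftrightarrow>
         ({l1..<r1} \<inter> {l2..<r2} \<noteq> {} \<or> x1 = x2)"
proof
  assume "{LL l1 x1 .. RR r1 x1} \<inter> {LL l2 x2 .. RR r2 x2} \<noteq> {}"
  then obtain t where "t \<in> {LL l1 x1 .. RR r1 x1} \<inter> {LL l2 x2 .. RR r2 x2}" by blast
  then have t: "LL l1 x1 \<le> t" "t \<le> RR r1 x1" "LL l2 x2 \<le> t" "t \<le> RR r2 x2" by auto
  show "{l1..<r1} \<inter> {l2..<r2} \<noteq> {} \<or> x1 = x2"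
  proof (cases "max l1 l2 < min r1 r2")
    case True
    then have "max l1 l2 \<in> {l1..<r1} \<inter> {l2..<r2}" by auto
    then show ?thesis by blast
  next
    case False
    have A: "real_of_int l1 \<le> t" "real_of_int l2 \<le> t" "t \<le> real_of_int r1" "t \<le> real_of_int r2"
      using t unfolding LL_def RR_def by (auto split: if_splits)
    have "x1 = x2"
      using False A t assms unfolding LL_def RR_def
      by (cases "l1 \<le> l2"; cases "r1 \<le> r2"; auto split: if_splits)
    then show ?thesis by blast
  qed
next
  assume h: "{l1..<r1} \<inter> {l2..<r2} \<noteq> {} \<or> x1 = x2"
  show "{LL l1 x1 .. RR r1 x1} \<inter> {LL l2 x2 .. RR r2 x2} \<noteq> {}"
  proof (cases "x1 = x2")
    case True
    then have "real_of_int x1 \<in> {LL l1 x1 .. RR r1 x1} \<inter> {LL l2 x2 .. RR r2 x2}"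
      using assms unfolding LL_def RR_def by auto
    then show ?thesis by blast
  next
    case False
    then obtain x where "x \<in> {l1..<r1} \<inter> {l2..<r2}" using h by blast
    then have x: "l1 \<le> x" "x < r1" "l2 \<le> x" "x < r2" by auto
    then have "real_of_int x + 1/2 \<in> {LL l1 x1 .. RR r1 x1} \<inter> {LL l2 x2 .. RR r2 x2}"
      unfolding LL_def RR_def by auto
    then show ?thesis by blast
  qed
qed




lemma row_step:
  assumes "intersects_row ps y"
  shows "\<exists>k. Suc k < length ps \<and> snd (ps!k) = y \<and> snd (ps!Suc k) = y"
proof -
  obtain x i where "Suc i < length ps" "{(x, y), (x + 1, y)} = {ps ! i, ps ! Suc i}"
    using assms unfolding intersects_row_def path_edges_def by blast
  then have "ps ! i \<in> {(x, y), (x + 1, y)}" "ps ! Suc i \<in> {(x, y), (x + 1, y)}" by auto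
  then have "snd (ps ! i) = y" "snd (ps ! Suc i) = y" by auto
  then show ?thesis using \<open>Suc i < length ps\<close> by blast
qed

lemma char:
  assumes gp: "grid_path ps" and bd: "bends ps \<le> 2"
    and ra: "intersects_row ps a" and rb: "intersects_row ps b" and ab: "a \<noteq> b"
  shows "\<exists>xu la ra lb rb. la < ra \<and> (xu = la \<or> xu = ra) \<and> lb < rb \<and> (xu = lb \<or> xu = rb) \<and>
     path_edges ps = hedges a la ra \<union> vedges xu (min a b) (max a b) \<union> hedges b lb rb"
proof -
  have adj: "\<forall>i. Suc i < length ps \<longrightarrow> grid_adj (ps!i) (ps!Suc i)" using gp unfolding grid_path_def by blast
  obtain ka where ka: "Suc ka < length ps" "snd (ps!ka) = a" "snd (ps!Suc ka) = a" using row_step[OF ra] by blast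
  obtain kb where kb: "Suc kb < length ps" "snd (ps!kb) = b" "snd (ps!Suc kb) = b" using row_step[OF rb] by blast
  have "ka \<noteq> kb" using ka kb ab by auto
  then consider "ka < kb" | "kb < ka" by linarith
  then show ?thesis
  proof cases
    case 1
    show ?thesis by (rule char_ordered[OF adj bd ka kb 1 ab])
  next
    case 2
    from char_ordered[OF adj bd kb ka 2 ab[symmetric]] obtain xu la ra lb rb where
      "la < ra \<and> (xu = la \<or> xu = ra) \<and> lb < rb \<and> (xu = lb \<or> xu = rb) \<and>
       path_edges ps = hedges b la ra \<union> vedges xu (min b a) (max b a) \<union> hedges a lb rb" by blast
    then show ?thesis
      by (simp add: min.commute max.commute Un_ac) blast
  qed
qed

theorem lemma3:
  fixes V :: "'v set" and E :: "'v \<Rightarrow> 'v \<Rightarrow> bool" and P :: "'v \<Rightarrow> gpoint list"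
    and a b :: int
  assumes "finite V"
    and "\<forall>u v. E u v \<longleftrightarrow> E v u"
    and "\<forall>u. \<not> E u u"
    and "Bk_EPG_rep 2 V E P"
    and "a \<noteq> b"
  shows "two_track_interval_graph {u \<in> V. row_index P u = {a, b}} E"
proof -
  define S where "S = {u \<in> V. row_index P u = {a, b}}"
  have rep1: "\<forall>u\<in>V. grid_path (P u) \<and> bends (P u) \<le> 2"
   and rep2: "\<forall>u\<in>V. \<forall>v\<in>V. u \<noteq> v \<longrightarrow> (E u v \<longleftrightarrow> path_edges (P u) \<inter> path_edges (P v) \<noteq> {})"
    using assms(4) unfolding Bk_EPG_rep_def by auto
  have "\<forall>u\<in>S. \<exists>t::int\<times>int\<times>int\<times>int\<times>int. (case t of (xu, la, ra, lb, rb) \<Rightarrow>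
     la < ra \<and> (xu = la \<or> xu = ra) \<and> lb < rb \<and> (xu = lb \<or> xu = rb) \<and>
     path_edges (P u) = hedges a la ra \<union> vedges xu (min a b) (max a b) \<union> hedges b lb rb)"
  proof
    fix u assume u: "u \<in> S"
    then have "intersects_row (P u) a" "intersects_row (P u) b" "u \<in> V"
      unfolding S_def row_index_def by (auto simp: set_eq_iff)
    then obtain xu la ra lb rb where "la < ra \<and> (xu = la \<or> xu = ra) \<and> lb < rb \<and> (xu = lb \<or> xu = rb) \<and>
     path_edges (P u) = hedges a la ra \<union> vedges xu (min a b) (max a b) \<union> hedges b lb rb"
      using char[of "P u" a b] rep1 assms(5) by blast
    then show "\<exists>t::int\<times>int\<times>int\<times>int\<times>int. (case t of (xu, la, ra, lb, rb) \<Rightarrow>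
     la < ra \<and> (xu = la \<or> xu = ra) \<and> lb < rb \<and> (xu = lb \<or> xu = rb) \<and>
     path_edges (P u) = hedges a la ra \<union> vedges xu (min a b) (max a b) \<union> hedges b lb rb)"
      by (intro exI[of _ "(xu, la, ra, lb, rb)"]) simp
  qed
  then have "\<exists>T. \<forall>u\<in>S. (case T u of (xu, la, ra, lb, rb) \<Rightarrow>
     la < ra \<and> (xu = la \<or> xu = ra) \<and> lb < rb \<and> (xu = lb \<or> xu = rb) \<and>
     path_edges (P u) = hedges a la ra \<union> vedges xu (min a b) (max a b) \<union> hedges b lb rb)"
    by (rule bchoice)
  then obtain T where T: "\<forall>u\<in>S. (case T u of (xu, la, ra, lb, rb) \<Rightarrow>
     la < ra \<and> (xu = la \<or> xu = ra) \<and> lb < rb \<and> (xu = lb \<or> xu = rb) \<and>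
     path_edges (P u) = hedges a la ra \<union> vedges xu (min a b) (max a b) \<union> hedges b lb rb)"
    by blast
  define X where "X u = fst (T u)" for u
  define LA where "LA u = fst (snd (T u))" for u
  define RA where "RA u = fst (snd (snd (T u)))" for u
  define LB where "LB u = fst (snd (snd (snd (T u))))" for u
  define RB where "RB u = snd (snd (snd (snd (T u))))" for u
  have T': "LA u < RA u \<and> (X u = LA u \<or> X u = RA u) \<and> LB u < RB u \<and> (X u = LB u \<or> X u = RB u) \<and>
     path_edges (P u) = hedges a (LA u) (RA u) \<union> vedges (X u) (min a b) (max a b) \<union> hedges b (LB u) (RB u)"
    if "u \<in> S" for u
    using T that unfolding X_def LA_def RA_def LB_def RB_def by (cases "T u") fastforce
  have "two_track_interval_graph S E"
    unfolding two_track_interval_graph_def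
  proof (rule exI[of _ "\<lambda>u. LL (LA u) (X u)"], rule exI[of _ "\<lambda>u. RR (RA u) (X u)"],
         rule exI[of _ "\<lambda>u. LL (LB u) (X u)"], rule exI[of _ "\<lambda>u. RR (RB u) (X u)"], intro conjI ballI impI)
    fix u assume "u \<in> S"
    then show "LL (LA u) (X u) \<le> RR (RA u) (X u)"
      using T' LR by auto
  next
    fix u assume "u \<in> S"
    then show "LL (LB u) (X u) \<le> RR (RB u) (X u)"
      using T' LR by auto
  next
    fix u v assume u: "u \<in> S" and v: "v \<in> S" and uv: "u \<noteq> v"
    have "E u v \<longleftrightarrow> path_edges (P u) \<inter> path_edges (P v) \<noteq> {}"
      using rep2 u v uv unfolding S_def by auto
    also have "\<dots> \<longleftrightarrow> {LA u..<RA u} \<inter> {LA v..<RA v} \<noteq> {} \<or> {LB u..<RB u} \<inter> {LB v..<RB v} \<noteq> {} \<or> X u = X v"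
    proof -
      have "path_edges (P u) = hedges a (LA u) (RA u) \<union> vedges (X u) (min a b) (max a b) \<union> hedges b (LB u) (RB u)"
        using T'[OF u] by blast
      moreover have "path_edges (P v) = hedges a (LA v) (RA v) \<union> vedges (X v) (min a b) (max a b) \<union> hedges b (LB v) (RB v)"
        using T'[OF v] by blast
      ultimately show ?thesis by (simp only: share[OF assms(5)])
    qed
    also have "\<dots> \<longleftrightarrow> {LL (LA u) (X u)..RR (RA u) (X u)} \<inter> {LL (LA v) (X v)..RR (RA v) (X v)} \<noteq> {} \<or>
        {LL (LB u) (X u)..RR (RB u) (X u)} \<inter> {LL (LB v) (X v)..RR (RB v) (X v)} \<noteq> {}"
      using track[of "LA u" "RA u" "X u" "LA v" "RA v" "X v"] track[of "LB u" "RB u" "X u" "LB v" "RB v" "X v"]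
        T'[OF u] T'[OF v] by auto
    finally show "E u v \<longleftrightarrow> {LL (LA u) (X u)..RR (RA u) (X u)} \<inter> {LL (LA v) (X v)..RR (RA v) (X v)} \<noteq> {} \<or>
        {LL (LB u) (X u)..RR (RB u) (X u)} \<inter> {LL (LB v) (X v)..RR (RB v) (X v)} \<noteq> {}" .
  qed
  then show ?thesis unfolding S_def .
qed


end
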